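(* Let $F$ be a finite extension of $\mathbf{Q}_p$, $K$ a finite unramified extension of $F$ of degree $h$, $\alpha\in\mathcal{O}_F$ with $v_F(\alpha)=h$, $S$ a relative Lubin–Tate group relative to $K/F$ attached to $\alpha$, $K_\infty$ the extension of $K$ generated by the torsion points of $S$, and $\chi_\alpha:\mathrm{Gal}(K_\infty/K)\xrightarrow{\sim}\mathcal{O}_F^\times$ the associated character. Let $L\subset K_\infty$ be an extension of $K$ with $K_\infty/L$ finite Galois, let $W=\mathrm{Gal}(K_\infty/L)$, $d=|W|$, and identify $W$ with $\chi_\alpha(W)$, the group of $d$-th roots of unity in $\mathcal{O}_F^\times$. Put $R(T)=\prod_{w\in\chi_\alpha(W)}[w](T)$. Then for every $a\in\mathcal{O}_F$ there exists a unique power series $\Gamma_a\in K[[T]]$ such that $$\Gamma_a\circ R=R\circ[a]=\prod_{w\in\chi_\alpha(W)}[a]\circ[w].$$ Moreover $\Gamma_a\circ\Gamma_b=\Gamma_{ab}$ for all $a,b\in\mathcal{O}_F$, and $\Gamma_a'(0)=a^d$.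
   Context: Relative Lubin–Tate group (de Shalit): with $\phi$ the Frobenius of $K/F$ acting on coefficients, choose $f\in\mathcal{O}_K[[T]]$ with $f=\pi T+O(T^2)$, $N_{K/F}(\pi)=\alpha$, $f\equiv T^{|k_F|}\bmod\mathfrak{m}_K$; $S$ is the unique formal group law over $\mathcal{O}_K$ with $S^{\phi}\circ f=f\circ S$. For $a\in\mathcal{O}_F$, $[a]\in\mathcal{O}_K[[T]]$ is the unique endomorphism of $S$ with $[a](T)=aT+O(T^2)$. Torsion points are the roots in $\mathfrak{m}_{\mathbf{C}_p}$ of the iterates of $[\alpha]$; $\chi_\alpha(g)$ is defined by $g(\lambda)=[\chi_\alpha(g)](\lambda)$ for all torsion points $\lambda$, and it gives an isomorphism $\mathrm{Gal}(K_\infty/K)\simeq\mathcal{O}_F^\times$. *)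

theory Defs
  imports "HOL-Computational_Algebra.Formal_Power_Series"
begin

definition roots_of_unity :: "'a::field set \<Rightarrow> nat \<Rightarrow> 'a set" where
  "roots_of_unity OF d = {w \<in> OF. w ^ d = 1}"

definition R_series :: "('a::field \<Rightarrow> 'a fps) \<Rightarrow> 'a set \<Rightarrow> nat \<Rightarrow> 'a fps" where
  "R_series brk OF d = (\<Prod>w\<in>roots_of_unity OF d. brk w)"

definition Gamma :: "('a::field \<Rightarrow> 'a fps) \<Rightarrow> 'a set \<Rightarrow> nat \<Rightarrow> 'a \<Rightarrow> 'a fps" where
  "Gamma brk OF d a = (THE G. fps_compose G (R_series brk OF d) = fps_compose (R_series brk OF d) (brk a))"

end

theory Submission
  imports Defs "HOL-Computational_Algebra.Polynomial"
begin
unbundle fps_syntax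

lemma sum_single:
  assumes "finite A" "k \<in> A" "\<And>i. i \<in> A \<Longrightarrow> i \<noteq> k \<Longrightarrow> f i = 0"
  shows "sum f A = f k"
proof -
  have "sum f A = f k + sum f (A - {k})" using assms by (simp add: sum.remove)
  also have "sum f (A - {k}) = 0" using assms by (intro sum.neutral) auto
  finally show ?thesis by simp
qed

lemma fps_prod_nth0: "(prod f A) $ 0 = (\<Prod>x\<in>A. f x $ 0 :: 'a::comm_ring_1)"
  by (induction A rule: infinite_finite_induct) auto

lemma fps_X_shift: "f $ 0 = 0 \<Longrightarrow> f = fps_X * fps_shift 1 (f :: 'a::comm_ring_1 fps)"
  by (intro fps_ext) (case_tac n, auto)

lemma compose_Xd_nth:
  fixes h :: "'a::comm_ring_1 fps"
  assumes "d \<ge> 1"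
  shows "(h oo fps_X ^ d) $ n = (if d dvd n then h $ (n div d) else 0)"
proof -
  have "(h oo fps_X ^ d) $ n = (\<Sum>i=0..n. h $ i * (if n = d * i then 1 else 0))"
    by (simp add: fps_compose_nth power_mult[symmetric])
  also have "\<dots> = (if d dvd n then h $ (n div d) else 0)"
  proof (cases "d dvd n")
    case True
    then obtain k where k: "n = d * k" by auto
    have "k \<le> n" using assms k by simp
    have "(\<Sum>i=0..n. h $ i * (if n = d * i then 1 else 0)) = h $ k * (if n = d * k then 1 else 0)"
      by (rule sum_single) (use k assms \<open>k \<le> n\<close> in auto)
    then show ?thesis using k assms True by simp
  next
    case False
    then have "\<And>i. n \<noteq> d * i" by auto
    then show ?thesis using False by simp
  qed
  finally show ?thesis .
qed

locale LT =
  fixes OF :: "'a::field_char_0 set" and brk :: "'a \<Rightarrow> 'a fps" and d :: nat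
  assumes sub0: "0 \<in> OF" and sub1: "1 \<in> OF"
    and subc: "\<forall>x\<in>OF. \<forall>y\<in>OF. x + y \<in> OF \<and> x * y \<in> OF \<and> - x \<in> OF"
    and brk_const: "\<forall>a\<in>OF. fps_nth (brk a) 0 = 0"
    and brk_lin: "\<forall>a\<in>OF. fps_nth (brk a) 1 = a"
    and brk_mult: "\<forall>a\<in>OF. \<forall>b\<in>OF. brk (a * b) = fps_compose (brk a) (brk b)"
    and d_pos: "d \<ge> 1"
    and mu_card: "card (roots_of_unity OF d) = d"
begin

abbreviation "M \<equiv> roots_of_unity OF d"
abbreviation "R \<equiv> R_series brk OF d"

lemma finM: "finite M"
proof (rule ccontr)
  assume "infinite M" then have "card M = 0" by simp
  then show False using mu_card d_pos by simp
qed

lemma M_OF: "w \<in> M \<Longrightarrow> w \<in> OF" and M_pow: "w \<in> M \<Longrightarrow> w ^ d = 1"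
  by (auto simp: roots_of_unity_def)

lemma M_nz: "w \<in> M \<Longrightarrow> w \<noteq> 0"
  using M_pow[of w] d_pos by (cases "w = 0") (auto simp: power_0_left)

lemma OF_mult: "a \<in> OF \<Longrightarrow> b \<in> OF \<Longrightarrow> a * b \<in> OF" using subc by blast

lemma OF_pow: "a \<in> OF \<Longrightarrow> a ^ n \<in> OF"
  by (induction n) (auto simp: sub1 OF_mult)

lemma M_mult: "v \<in> M \<Longrightarrow> w \<in> M \<Longrightarrow> v * w \<in> M"
  by (auto simp: roots_of_unity_def OF_mult power_mult_distrib)

lemma M_inv: "w \<in> M \<Longrightarrow> inverse w \<in> M"
proof -
  assume w: "w \<in> M"
  have wd: "w ^ d = 1" using M_pow[OF w] .
  have e: "w ^ d = w * w ^ (d - 1)" using d_pos by (cases d) auto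
  have "inverse w = w ^ (d - 1)"
    by (rule inverse_unique) (use e wd in simp)
  then have i1: "inverse w \<in> OF" using OF_pow M_OF[OF w] by simp
  have "inverse w ^ d = inverse (w ^ d)" by (rule power_inverse)
  then have i2: "inverse w ^ d = 1" using wd by simp
  show ?thesis using i1 i2 unfolding roots_of_unity_def by simp
qed

lemma reindex: assumes v: "v \<in> M" shows "bij_betw (\<lambda>w. w * v) M M"
proof (rule bij_betwI[where g = "\<lambda>w. w * inverse v"])
  show "(\<lambda>w. w * v) \<in> M \<rightarrow> M" using M_mult v by auto
  show "(\<lambda>w. w * inverse v) \<in> M \<rightarrow> M" using M_mult M_inv v by auto
qed (use M_nz v in auto)

lemma prod_reindex: "v \<in> M \<Longrightarrow> (\<Prod>w\<in>M. g (w * v)) = (\<Prod>w\<in>M. g w)"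
  by (rule prod.reindex_bij_betw[OF reindex, of v g])

lemma sum_reindex: "v \<in> M \<Longrightarrow> (\<Sum>w\<in>M. g (w * v)) = (\<Sum>w\<in>M. g w)"
  by (rule sum.reindex_bij_betw[OF reindex, of v g])

lemma B0: "a \<in> OF \<Longrightarrow> brk a $ 0 = 0" using brk_const by blast
lemma B1: "a \<in> OF \<Longrightarrow> brk a $ 1 = a" using brk_lin by blast
lemma Bm: "a \<in> OF \<Longrightarrow> b \<in> OF \<Longrightarrow> brk a oo brk b = brk (a * b)" using brk_mult by metis
lemma Bc: "a \<in> OF \<Longrightarrow> b \<in> OF \<Longrightarrow> brk a oo brk b = brk b oo brk a"
  using Bm by (metis mult.commute)

definition U where "U = (\<Prod>w\<in>M. fps_shift 1 (brk w))"

lemma R_eq: "R = fps_X ^ d * U"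
proof -
  have "R = (\<Prod>w\<in>M. fps_X * fps_shift 1 (brk w))"
    unfolding R_series_def by (intro prod.cong refl fps_X_shift) (use B0 M_OF in auto)
  also have "\<dots> = fps_X ^ d * U" by (simp add: prod.distrib U_def mu_card)
  finally show ?thesis .
qed

definition c where "c = (\<Prod>w\<in>M. w)"

lemma c_nz: "c \<noteq> 0" unfolding c_def using finM M_nz by simp

lemma R_nth: "R $ n = (if n < d then 0 else U $ (n - d))"
  by (simp add: R_eq fps_X_power_mult_nth)

lemma U0: "U $ 0 = c"
  unfolding U_def c_def fps_prod_nth0 using B1 M_OF by simp

lemma R_low: "n < d \<Longrightarrow> R $ n = 0" by (simp add: R_nth)
lemma R_d: "R $ d = c" by (simp add: R_nth U0)
lemma R_0: "R $ 0 = 0" using R_low d_pos by simp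
lemma R_nz: "R \<noteq> 0" using R_d c_nz by auto
lemma R_sub: "subdegree R = d" by (rule subdegreeI) (use R_d c_nz R_low in auto)


lemma R_inv: "v \<in> M \<Longrightarrow> R oo brk v = R"
proof -
  assume v: "v \<in> M"
  have "R oo brk v = (\<Prod>w\<in>M. brk w oo brk v)"
    unfolding R_series_def using B0 M_OF v by (simp add: fps_compose_prod_distrib)
  also have "\<dots> = (\<Prod>w\<in>M. brk (w * v))"
    by (intro prod.cong refl Bm) (use M_OF v in auto)
  also have "\<dots> = R" unfolding R_series_def by (rule prod_reindex[OF v])
  finally show ?thesis .
qed

lemma part2: "a \<in> OF \<Longrightarrow> R oo brk a = (\<Prod>w\<in>M. brk a oo brk w)"
proof -
  assume a: "a \<in> OF"
  have "R oo brk a = (\<Prod>w\<in>M. brk w oo brk a)"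
    unfolding R_series_def using B0 a by (simp add: fps_compose_prod_distrib)
  also have "\<dots> = (\<Prod>w\<in>M. brk a oo brk w)"
    by (intro prod.cong refl Bc) (use M_OF a in auto)
  finally show ?thesis .
qed

definition phi where
  "phi = fps_const (inverse (of_nat d)) * (\<Sum>w\<in>M. fps_const (inverse w) * brk w)"

lemma phi0: "phi $ 0 = 0"
  unfolding phi_def using B0 M_OF by (simp add: fps_sum_nth)

lemma phi1: "phi $ 1 = 1"
proof -
  have "(\<Sum>w\<in>M. fps_const (inverse w) * brk w) $ 1 = (\<Sum>w\<in>M. (1::'a))"
    unfolding fps_sum_nth by (intro sum.cong refl) (use B1 M_OF M_nz in auto)
  then show ?thesis unfolding phi_def using mu_card d_pos by simp
qed

lemma phi_comp: assumes v: "v \<in> M" shows "phi oo brk v = fps_const v * phi"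
proof -
  have bv0: "brk v $ 0 = 0" using B0 M_OF v by auto
  have "phi oo brk v = fps_const (inverse (of_nat d)) *
     (\<Sum>w\<in>M. fps_const (inverse w) * (brk w oo brk v))"
    unfolding phi_def by (simp add: fps_compose_mult_distrib[OF bv0] fps_compose_sum_distrib)
  also have "(\<Sum>w\<in>M. fps_const (inverse w) * (brk w oo brk v))
     = (\<Sum>w\<in>M. fps_const v * (fps_const (inverse (w * v)) * brk (w * v)))"
  proof (intro sum.cong refl)
    fix w assume w: "w \<in> M"
    have e: "inverse w = v * inverse (w * v)" using M_nz v w by (simp add: field_simps)
    have "fps_const (inverse w) = fps_const v * fps_const (inverse (w * v))"
      by (simp only: e fps_const_mult)
    then show "fps_const (inverse w) * (brk w oo brk v)
       = fps_const v * (fps_const (inverse (w * v)) * brk (w * v))"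
      using Bm[of w v] M_OF v w by (simp only: mult.assoc)
  qed
  also have "\<dots> = fps_const v * (\<Sum>w\<in>M. fps_const (inverse (w * v)) * brk (w * v))"
    by (simp add: sum_distrib_left)
  also have "(\<Sum>w\<in>M. fps_const (inverse (w * v)) * brk (w * v))
     = (\<Sum>w\<in>M. fps_const (inverse w) * brk w)"
    by (rule sum_reindex[OF v])
  finally show ?thesis unfolding phi_def by (simp add: mult.left_commute)
qed

definition psi where "psi = fps_inv phi"

lemma psi0: "psi $ 0 = 0" unfolding psi_def by (simp add: fps_inv_def)
lemma psi1: "psi $ 1 = 1" unfolding psi_def using phi1 by (simp add: fps_inv_def)
lemma phi_psi: "phi oo psi = fps_X" unfolding psi_def by (rule fps_inv_right) (use phi0 phi1 in auto)
lemma psi_phi: "psi oo phi = fps_X" unfolding psi_def by (rule fps_inv) (use phi0 phi1 in auto)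

lemma lin0: "(fps_const v * fps_X :: 'a fps) $ 0 = 0" by simp

lemma Bv_conj: assumes v: "v \<in> M"
  shows "brk v = (psi oo (fps_const v * fps_X)) oo phi"
proof -
  have bv0: "brk v $ 0 = 0" using B0 M_OF v by auto
  have "brk v = fps_X oo brk v" using bv0 by simp
  also have "\<dots> = (psi oo phi) oo brk v" by (simp add: psi_phi)
  also have "\<dots> = psi oo (phi oo brk v)" using fps_compose_assoc[OF bv0 phi0, of psi] by simp
  also have "phi oo brk v = (fps_const v * fps_X) oo phi"
    using phi_comp[OF v] phi0 by (simp add: fps_compose_mult_distrib)
  also have "psi oo ((fps_const v * fps_X) oo phi) = (psi oo (fps_const v * fps_X)) oo phi"
    using fps_compose_assoc[OF phi0 lin0, of psi] by simp
  finally show ?thesis .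
qed

lemma inv_psi:
  assumes f: "\<forall>v\<in>M. f oo brk v = f" and v: "v \<in> M"
  shows "(f oo psi) oo (fps_const v * fps_X) = f oo psi"
proof -
  let ?L = "fps_const v * fps_X :: 'a fps"
  have pl0: "(psi oo ?L) $ 0 = 0" using psi0 by simp
  have "f = f oo brk v" using f v by simp
  also have "\<dots> = f oo ((psi oo ?L) oo phi)" using Bv_conj[OF v] by simp
  also have "\<dots> = (f oo (psi oo ?L)) oo phi" using fps_compose_assoc[OF phi0 pl0, of f] by simp
  also have "f oo (psi oo ?L) = (f oo psi) oo ?L" using fps_compose_assoc[OF lin0 psi0, of f] by simp
  finally have "f oo psi = (((f oo psi) oo ?L) oo phi) oo psi" by simp
  also have "\<dots> = ((f oo psi) oo ?L) oo (phi oo psi)"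
    using fps_compose_assoc[OF psi0 phi0, of "(f oo psi) oo ?L"] by simp
  finally show ?thesis by (simp add: phi_psi)
qed

lemma coef_zero:
  assumes f: "\<forall>v\<in>M. f oo brk v = f" and n: "\<not> d dvd n"
  shows "(f oo psi) $ n = 0"
proof (rule ccontr)
  assume nz: "(f oo psi) $ n \<noteq> 0"
  define r where "r = n mod d"
  have "n mod d \<noteq> 0" using n by (simp add: dvd_eq_mod_eq_0)
  then have r0: "0 < r" unfolding r_def by simp
  have rd: "r < d" using d_pos unfolding r_def by simp
  have nd: "d * (n div d) + r = n" unfolding r_def by (rule mult_div_mod_eq)
  have vr: "v ^ r = 1" if v: "v \<in> M" for v
  proof -
    have "((f oo psi) oo (fps_const v * fps_X)) $ n = (f oo psi) $ n"
      using inv_psi[OF f v] by simp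
    then have "v ^ n * (f oo psi) $ n = (f oo psi) $ n" by simp
    then have vn: "v ^ n = 1" using nz by simp
    have "v ^ (d * (n div d) + r) = v ^ (d * (n div d)) * v ^ r" by (rule power_add)
    also have "v ^ (d * (n div d)) = (v ^ d) ^ (n div d)" by (rule power_mult)
    also have "\<dots> = 1" using M_pow[OF v] by simp
    finally have "v ^ n = v ^ r" unfolding nd by simp
    then show ?thesis using vn by simp
  qed
  define p :: "'a poly" where "p = monom 1 r - 1"
  have pe: "poly p x = x ^ r - 1" for x unfolding p_def by (simp add: poly_monom)
  have pnz: "p \<noteq> 0" proof assume "p = 0" then have "poly p 0 = 0" by simp
    moreover have "(0::'a) ^ r = 0" using r0 by (simp add: power_0_left)
    ultimately show False using pe[of 0] by simp qed
  have "M \<subseteq> {x. poly p x = 0}"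
  proof
    fix x assume "x \<in> M"
    then show "x \<in> {x. poly p x = 0}" using vr[of x] pe[of x] by simp
  qed
  then have "card M \<le> card {x. poly p x = 0}"
    by (intro card_mono poly_roots_finite pnz)
  also have "\<dots> \<le> degree p" by (rule card_poly_roots_bound[OF pnz])
  also have "\<dots> \<le> r" unfolding p_def by (intro degree_diff_le degree_monom_le) simp
  finally show False using mu_card rd by simp
qed

definition hh where "hh f = Abs_fps (\<lambda>m. (f oo psi) $ (m * d))"

lemma hh_repr: assumes f: "\<forall>v\<in>M. f oo brk v = f" shows "hh f oo fps_X ^ d = f oo psi"
proof (rule fps_ext)
  fix n
  show "(hh f oo fps_X ^ d) $ n = (f oo psi) $ n"
    using coef_zero[OF f, of n] d_pos by (auto simp: compose_Xd_nth hh_def)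
qed

lemma Rpsi_d: "(R oo psi) $ d = c"
proof -
  have "(R oo psi) $ d = (\<Sum>i=0..d. R $ i * (psi ^ i) $ d)" by (rule fps_compose_nth)
  also have "\<dots> = R $ d * (psi ^ d) $ d"
    by (rule sum_single) (use R_low in auto)
  also have "\<dots> = c" using R_d startsby_zero_power_nth_same[OF psi0, of d] psi1 by simp
  finally show ?thesis .
qed

lemma hR0: "hh R $ 0 = 0" unfolding hh_def using R_0 by simp
lemma hR1: "hh R $ 1 \<noteq> 0" unfolding hh_def using Rpsi_d c_nz by simp

lemma exist: assumes f: "\<forall>v\<in>M. f oo brk v = f" shows "\<exists>G. G oo R = f"
proof -
  define Y where "Y = fps_X ^ d oo phi"
  have Y0: "Y $ 0 = 0" unfolding Y_def using phi0 d_pos by simp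
  have Xd0: "(fps_X ^ d :: 'a fps) $ 0 = 0" using d_pos by simp
  have iR0: "fps_inv (hh R) $ 0 = 0" by (simp add: fps_inv_def)
  have Rr: "R = hh R oo Y"
  proof -
    have "R = R oo (psi oo phi)" using R_0 by (simp add: psi_phi)
    also have "\<dots> = (R oo psi) oo phi" using fps_compose_assoc[OF phi0 psi0] by simp
    also have "\<dots> = (hh R oo fps_X ^ d) oo phi" using hh_repr[of R] R_inv by simp
    also have "\<dots> = hh R oo Y" unfolding Y_def using fps_compose_assoc[OF phi0 Xd0] by simp
    finally show ?thesis .
  qed
  have "(hh f oo fps_inv (hh R)) oo R = (hh f oo fps_inv (hh R)) oo (hh R oo Y)" using Rr by simp
  also have "\<dots> = hh f oo (fps_inv (hh R) oo (hh R oo Y))"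
    using fps_compose_assoc[OF _ iR0, of "hh R oo Y" "hh f"] Y0 hR0 by simp
  also have "fps_inv (hh R) oo (hh R oo Y) = (fps_inv (hh R) oo hh R) oo Y"
    using fps_compose_assoc[OF Y0 hR0] by simp
  also have "\<dots> = Y" using fps_inv[OF hR0 hR1] Y0 by simp
  also have "hh f oo Y = (hh f oo fps_X ^ d) oo phi"
    unfolding Y_def using fps_compose_assoc[OF phi0 Xd0] by simp
  also have "\<dots> = (f oo psi) oo phi" using hh_repr[OF f] by simp
  also have "\<dots> = f oo (psi oo phi)" using fps_compose_assoc[OF phi0 psi0] by simp
  also have "\<dots> = f" by (simp add: psi_phi)
  finally show ?thesis by blast
qed

lemma uniq: "G1 oo R = G2 oo R \<Longrightarrow> G1 = G2"
proof -
  assume "G1 oo R = G2 oo R"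
  then have "(G1 - G2) oo R = 0" by (simp add: fps_compose_sub_distrib)
  then show ?thesis using fps_compose_eq_0_iff[OF R_0] R_nz by simp
qed

lemma inv_a: assumes a: "a \<in> OF" shows "\<forall>v\<in>M. (R oo brk a) oo brk v = R oo brk a"
proof
  fix v assume v: "v \<in> M"
  have a0: "brk a $ 0 = 0" and v0: "brk v $ 0 = 0" using B0 a v M_OF by auto
  have "(R oo brk a) oo brk v = R oo (brk a oo brk v)" using fps_compose_assoc[OF v0 a0] by simp
  also have "\<dots> = R oo (brk v oo brk a)" using Bc a v M_OF by simp
  also have "\<dots> = (R oo brk v) oo brk a" using fps_compose_assoc[OF a0 v0] by simp
  finally show "(R oo brk a) oo brk v = R oo brk a" using R_inv v by simp
qed

lemma ex1: assumes a: "a \<in> OF" shows "\<exists>!G. G oo R = R oo brk a"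
proof -
  obtain G where G: "G oo R = R oo brk a" using exist[OF inv_a[OF a]] by blast
  show ?thesis
  proof (rule ex1I[of _ G])
    show "G oo R = R oo brk a" by (rule G)
    fix G' assume "G' oo R = R oo brk a"
    then have "G' oo R = G oo R" using G by simp
    then show "G' = G" by (rule uniq)
  qed
qed

lemma Gamma_spec: "a \<in> OF \<Longrightarrow> Gamma brk OF d a oo R = R oo brk a"
  unfolding Gamma_def by (rule theI'[OF ex1])

lemma Gamma0: "a \<in> OF \<Longrightarrow> Gamma brk OF d a $ 0 = 0"
  using Gamma_spec[of a] fps_compose_nth_0[of "Gamma brk OF d a" R] fps_compose_nth_0[of R "brk a"] R_0
  by simp

lemma part3: assumes a: "a \<in> OF" and b: "b \<in> OF"
  shows "Gamma brk OF d a oo Gamma brk OF d b = Gamma brk OF d (a * b)"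
proof (rule uniq)
  have a0: "brk a $ 0 = 0" and b0: "brk b $ 0 = 0" using B0 a b by auto
  have "(Gamma brk OF d a oo Gamma brk OF d b) oo R = Gamma brk OF d a oo (Gamma brk OF d b oo R)"
    using fps_compose_assoc[OF R_0 Gamma0[OF b]] by simp
  also have "\<dots> = Gamma brk OF d a oo (R oo brk b)" using Gamma_spec[OF b] by simp
  also have "\<dots> = (Gamma brk OF d a oo R) oo brk b" using fps_compose_assoc[OF b0 R_0] by simp
  also have "\<dots> = (R oo brk a) oo brk b" using Gamma_spec[OF a] by simp
  also have "\<dots> = R oo (brk a oo brk b)" using fps_compose_assoc[OF b0 a0] by simp
  also have "\<dots> = R oo brk (a * b)" using Bm a b by simp
  also have "\<dots> = Gamma brk OF d (a * b) oo R" using Gamma_spec OF_mult a b by simp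
  finally show "(Gamma brk OF d a oo Gamma brk OF d b) oo R = Gamma brk OF d (a * b) oo R" .
qed

lemma part4: assumes a: "a \<in> OF" shows "fps_deriv (Gamma brk OF d a) $ 0 = a ^ d"
proof -
  let ?G = "Gamma brk OF d a"
  have a0: "brk a $ 0 = 0" using B0 a by auto
  have "(?G oo R) $ d = (\<Sum>i=0..d. ?G $ i * (R ^ i) $ d)" by (rule fps_compose_nth)
  also have "\<dots> = ?G $ 1 * (R ^ 1) $ d"
  proof (rule sum_single)
    fix i assume i: "i \<in> {0..d}" "i \<noteq> 1"
    show "?G $ i * (R ^ i) $ d = 0"
    proof (cases "i = 0")
      case True then show ?thesis using Gamma0[OF a] by simp
    next
      case False
      then have "d < i * subdegree R" using i d_pos R_sub by (simp add: less_le_trans)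
      then show ?thesis by (simp add: fps_pow_nth_below_subdegree)
    qed
  qed (use d_pos in auto)
  also have "\<dots> = ?G $ 1 * c" using R_d by simp
  finally have l: "(?G oo R) $ d = ?G $ 1 * c" .
  have "(R oo brk a) $ d = (\<Sum>i=0..d. R $ i * (brk a ^ i) $ d)" by (rule fps_compose_nth)
  also have "\<dots> = R $ d * (brk a ^ d) $ d" by (rule sum_single) (use R_low in auto)
  also have "\<dots> = c * a ^ d" using R_d startsby_zero_power_nth_same[OF a0, of d] B1 a by simp
  finally have r: "(R oo brk a) $ d = c * a ^ d" .
  have "?G $ 1 * c = c * a ^ d" by (metis l r Gamma_spec[OF a])
  then have "?G $ 1 = a ^ d" using c_nz by (metis mult.commute mult_cancel_left)
  then show ?thesis by simp
qed

end

theorem mainTheorem6: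
  fixes OF :: "'a::field_char_0 set" and brk :: "'a \<Rightarrow> 'a fps" and d :: nat
  assumes subring: "0 \<in> OF" "1 \<in> OF" "\<forall>x\<in>OF. \<forall>y\<in>OF. x + y \<in> OF \<and> x * y \<in> OF \<and> - x \<in> OF"
    and brk_const: "\<forall>a\<in>OF. fps_nth (brk a) 0 = 0"
    and brk_lin: "\<forall>a\<in>OF. fps_nth (brk a) 1 = a"
    and brk_mult: "\<forall>a\<in>OF. \<forall>b\<in>OF. brk (a * b) = fps_compose (brk a) (brk b)"
    and d_pos: "d \<ge> 1"
    and mu_card: "card (roots_of_unity OF d) = d"
  shows "(\<forall>a\<in>OF. \<exists>!G. fps_compose G (R_series brk OF d) = fps_compose (R_series brk OF d) (brk a))
    \<and> (\<forall>a\<in>OF. fps_compose (R_series brk OF d) (brk a)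
              = (\<Prod>w\<in>roots_of_unity OF d. fps_compose (brk a) (brk w)))
    \<and> (\<forall>a\<in>OF. \<forall>b\<in>OF. fps_compose (Gamma brk OF d a) (Gamma brk OF d b) = Gamma brk OF d (a * b))
    \<and> (\<forall>a\<in>OF. fps_nth (fps_deriv (Gamma brk OF d a)) 0 = a ^ d)"
proof -
  interpret L: LT OF brk d
    by (rule LT.intro) (use assms in auto)
  show ?thesis
  proof (intro conjI ballI)
    fix a assume a: "a \<in> OF"
    show "\<exists>!G. G oo R_series brk OF d = R_series brk OF d oo brk a" by (rule L.ex1[OF a])
    show "R_series brk OF d oo brk a = (\<Prod>w\<in>roots_of_unity OF d. brk a oo brk w)"
      by (rule L.part2[OF a])
    show "fps_deriv (Gamma brk OF d a) $ 0 = a ^ d" by (rule L.part4[OF a])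
    fix b assume b: "b \<in> OF"
    show "Gamma brk OF d a oo Gamma brk OF d b = Gamma brk OF d (a * b)" by (rule L.part3[OF a b])
  qed
qed

end
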